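(* Let $\varepsilon>0$ and $d\in\mathbb R$ with $d\ne0$ and $\varepsilon\ell d<2r_0$. Then \[ -\varepsilon^{-1}\Big(\sigma_0\big(\varepsilon\tfrac\ell2d\big)-1\Big)\Big(3\sigma_0\big(\varepsilon\tfrac\ell2d\big)-1\Big)\,d>0 . \]
   Context: $\ell>0$, $r_0=\frac4{27}$. For $r<r_0$, $\sigma_0(r)$ is the largest real root of $\sigma^3-\sigma^2+r=0$ (the real branch with $\sigma_0(0)=1$, written in the paper by Cardano's formula $\sigma_0(r)=\frac13(1+C_-(r)+C_+(r))$, $C_\pm(r)=\frac32(-4r+2r_0\pm4\sqrt{r(r-r_0)})^{1/3}$). The left-hand side is $\mathfrak C_{\varepsilon,0}[d]\,d$ where $\mathfrak C_{\varepsilon,0}$ is the (non dispersive) Cummins operator. *)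

theory Defs
  imports Complex_Main
begin

definition r0 :: real where "r0 = 4 / 27"

text \<open>sigma0 r: the largest real root of s^3 - s^2 + r = 0 (meaningful for r < r0).\<close>
definition sigma0 :: "real \<Rightarrow> real" where
  "sigma0 r = Max {s :: real. s ^ 3 - s ^ 2 + r = 0}"

end

theory Submission
  imports Defs "HOL-Computational_Algebra.Polynomial"
begin

lemma fin_roots: "finite {s :: real. s ^ 3 - s ^ 2 + r = 0}"
proof -
  have "{s :: real. s ^ 3 - s ^ 2 + r = 0} = {s. poly [:r, 0, -1, 1:] s = 0}"
    by (auto simp: algebra_simps power2_eq_square power3_eq_cube)
  moreover have "finite {s. poly [:r, 0, -1, (1::real):] s = 0}"
    by (rule poly_roots_finite) simp
  ultimately show ?thesis by simp
qed

lemma sig_ge: assumes "t ^ 3 - t ^ 2 + r = 0"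
  shows "t \<le> sigma0 r" "sigma0 r ^ 3 - sigma0 r ^ 2 + r = 0"
proof -
  have ne: "{s :: real. s ^ 3 - s ^ 2 + r = 0} \<noteq> {}" using assms by blast
  show "t \<le> sigma0 r" unfolding sigma0_def using fin_roots assms by simp
  have "sigma0 r \<in> {s :: real. s ^ 3 - s ^ 2 + r = 0}"
    unfolding sigma0_def using Max_in[OF fin_roots ne] .
  then show "sigma0 r ^ 3 - sigma0 r ^ 2 + r = 0" by simp
qed

theorem lemma4p13:
  fixes l eps d :: real
  assumes "l > 0" and "eps > 0" and "d \<noteq> 0" and "eps * l * d < 2 * r0"
  shows "- (1 / eps) * (sigma0 (eps * (l / 2) * d) - 1)
           * (3 * sigma0 (eps * (l / 2) * d) - 1) * d > 0"
proof -
  define r where "r = eps * (l / 2) * d"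
  define s where "s = sigma0 r"
  have rr: "r < 4/27" using assms(4) unfolding r_def r0_def by simp
  have cont: "\<forall>x. isCont (\<lambda>x::real. x ^ 3 - x ^ 2 + r) x" by (intro allI continuous_intros)
  have key: "(s - 1) * (3 * s - 1) * d < 0"
  proof (cases "d > 0")
    case True
    have rp: "r > 0" unfolding r_def using True assms by simp
    have "\<exists>x\<ge>2/3. x \<le> 1 \<and> x ^ 3 - x ^ 2 + r = 0"
      by (rule IVT) (use rr rp cont in \<open>auto simp: power3_eq_cube power2_eq_square\<close>)
    then obtain t where t: "t \<ge> 2/3" "t ^ 3 - t ^ 2 + r = 0" by blast
    have s0: "s ^ 3 - s ^ 2 + r = 0" using sig_ge(2)[OF t(2)] s_def by simp
    have "t \<le> s" using sig_ge(1)[OF t(2)] s_def by simp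
    hence s1: "s > 1/3" using t by simp
    have s2: "s < 1"
    proof (rule ccontr)
      assume "\<not> s < 1"
      hence "s ^ 2 * (s - 1) \<ge> 0" by simp
      hence "s ^ 3 - s ^ 2 + r > 0" using rp by (simp add: algebra_simps power3_eq_cube power2_eq_square)
      thus False using s0 by simp
    qed
    have "(s - 1) * (3 * s - 1) < 0" using s1 s2 by (simp add: mult_neg_pos)
    thus ?thesis using True by (simp add: mult_neg_pos)
  next
    case False
    hence dn: "d < 0" using assms(3) by simp
    have rn: "r < 0" unfolding r_def using dn assms by (simp add: mult_pos_neg)
    define b where "b = 1 - r"
    have b1: "b > 1" using rn b_def by simp
    have fb: "b ^ 3 - b ^ 2 + r = - r * (b ^ 2 - 1)"
      unfolding b_def by (simp add: algebra_simps power3_eq_cube power2_eq_square)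
    have "b ^ 2 > 1" using b1 by (simp add: one_less_power)
    hence fbp: "b ^ 3 - b ^ 2 + r \<ge> 0" using fb rn by (simp add: mult_nonpos_nonneg)
    have "\<exists>x\<ge>1. x \<le> b \<and> x ^ 3 - x ^ 2 + r = 0"
      by (rule IVT) (use rn fbp b1 cont in auto)
    then obtain t where t: "t \<ge> 1" "t ^ 3 - t ^ 2 + r = 0" by blast
    have "t \<noteq> 1" using t rn by auto
    moreover have "t \<le> s" using sig_ge(1)[OF t(2)] s_def by simp
    ultimately have s1: "s > 1" using t by simp
    have "(s - 1) * (3 * s - 1) > 0" using s1 by simp
    thus ?thesis using dn by (simp add: mult_pos_neg)
  qed
  have "- (1 / eps) * (s - 1) * (3 * s - 1) * d = - (1/eps) * ((s - 1) * (3 * s - 1) * d)"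
    by simp
  also have "\<dots> > 0" using key assms(2) by (simp add: divide_neg_pos)
  finally show ?thesis unfolding s_def r_def .
qed

end
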